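(* Every integer $n>1$ with $F_n=D_n$ is a prime power pseudoperfect number, i.e., \[ \sum_{p^k\mid n}\frac{1}{p^k}+\frac1n=1, \] where the sum ranges over all prime powers $p^k$ ($p$ prime, $k\ge1$) dividing $n$.
   Context: For a composite integer $n$, let $d(n)$ denote the largest divisor of $n$ with $1<d(n)<n$. Define $f$ on integers $n>1$ by $f(n)=n-1$ if $n$ is prime and $f(n)=n-d(n)$ if $n$ is composite. Let $f^{(0)}(n)=n$ and $f^{(i)}=f\circ f^{(i-1)}$. Define $F_n=\{n,f(n),f^{(2)}(n),\dots,1\}$, the set of iterates of $f$ starting at $n$ up to and including the first occurrence of $1$, and let $D_n$ be the set of positive divisors of $n$. A prime power pseudoperfect number is an integer $n>1$ satisfying $\sum_{p^k\mid n}1/p^k+1/n=1$, the sum over all prime powers $p^k$ ($p$ prime, $k\ge 1$) dividing $n$. *)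

theory Defs
  imports Complex_Main "HOL-Computational_Algebra.Primes"
begin

text \<open>Largest divisor d of n with 1 < d < n (meaningful for composite n).\<close>
definition dmax :: "nat \<Rightarrow> nat" where
  "dmax n = Max {d. d dvd n \<and> 1 < d \<and> d < n}"

definition fstep :: "nat \<Rightarrow> nat" where
  "fstep n = (if prime n then n - 1 else n - dmax n)"

text \<open>F_n: the iterates of f starting at n up to and including the first occurrence of 1.\<close>
definition Fset :: "nat \<Rightarrow> nat set" where
  "Fset n = {(fstep ^^ i) n | i. \<forall>j<i. (fstep ^^ j) n \<noteq> 1}"

definition Dset :: "nat \<Rightarrow> nat set" where
  "Dset n = {d. d dvd n \<and> 0 < d}"

definition prime_power_pseudoperfect :: "nat \<Rightarrow> bool" where
  "prime_power_pseudoperfect n \<longleftrightarrow> 1 < n \<and>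
     (\<Sum>q\<in>{q. q dvd n \<and> (\<exists>p k. prime p \<and> 1 \<le> k \<and> q = p ^ k)}. 1 / real q) + 1 / real n = 1"

end

theory Submission
  imports Defs
begin

lemma dset_fin: "finite {d::nat. d dvd x \<and> 1 < d \<and> d < x}"
  by (rule finite_subset[of _ "{..<x}"]) auto

lemma composite_ex:
  assumes "1 < (x::nat)" "\<not> prime x"
  shows "{d. d dvd x \<and> 1 < d \<and> d < x} \<noteq> {}"
proof -
  obtain m where "m dvd x" "m \<noteq> 1" "m \<noteq> x" using assms prime_nat_iff by blast
  moreover then have "m \<le> x" "m > 0" using assms by (auto intro: dvd_imp_le)
  ultimately have "m \<in> {d. d dvd x \<and> 1 < d \<and> d < x}" by auto
  then show ?thesis by blast
qed

lemma dmax_mem: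
  assumes "1 < (x::nat)" "\<not> prime x"
  shows "dmax x dvd x \<and> 1 < dmax x \<and> dmax x < x"
proof -
  have "dmax x \<in> {d. d dvd x \<and> 1 < d \<and> d < x}"
    unfolding dmax_def using Max_in[OF dset_fin composite_ex[OF assms]] .
  then show ?thesis by simp
qed

lemma dmax_ge:
  assumes "e dvd x" "1 < e" "e < x"
  shows "e \<le> dmax x"
  unfolding dmax_def using assms by (intro Max_ge[OF dset_fin]) auto

lemma fstep_lt:
  assumes "1 < x"
  shows "0 < fstep x \<and> fstep x < x"
proof (cases "prime x")
  case True then show ?thesis using assms by (simp add: fstep_def)
next
  case False then show ?thesis using dmax_mem[OF assms False] by (simp add: fstep_def)
qed

definition Sol :: "nat \<Rightarrow> bool" where
  "Sol n \<longleftrightarrow> (\<forall>d. d dvd n \<and> 1 < d \<longrightarrow> fstep d dvd n \<and>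
      (\<forall>e. e dvd n \<and> fstep d < e \<longrightarrow> d \<le> e))"

lemma iter_dec:
  fixes n :: nat
  assumes "\<forall>t<b. (fstep ^^ t) n \<noteq> 1" "a \<le> b" "1 \<le> n"
  shows "1 \<le> (fstep ^^ b) n \<and> (fstep ^^ b) n \<le> (fstep ^^ a) n"
  using assms
proof (induction b arbitrary: a)
  case 0 then show ?case by simp
next
  case (Suc b)
  have IH: "1 \<le> (fstep ^^ b) n \<and> (\<forall>a\<le>b. (fstep ^^ b) n \<le> (fstep ^^ a) n)"
    using Suc.IH[of b] Suc.IH Suc.prems by (auto simp: less_Suc_eq)
  have "(fstep ^^ b) n \<noteq> 1" using Suc.prems by auto
  then have gt: "1 < (fstep ^^ b) n" using IH by auto
  have st: "1 \<le> (fstep ^^ Suc b) n \<and> (fstep ^^ Suc b) n < (fstep ^^ b) n"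
    using fstep_lt[OF gt] by simp
  show ?case
  proof (cases "a = Suc b")
    case True then show ?thesis using st by simp
  next
    case False then have "a \<le> b" using Suc.prems by simp
    then show ?thesis using st IH by fastforce
  qed
qed

lemma L1:
  assumes "1 < n" "Fset n = Dset n"
  shows "Sol n"
  unfolding Sol_def
proof (intro allI impI conjI)
  fix d assume d: "d dvd n \<and> 1 < d"
  then have "d \<in> Fset n" using assms by (auto simp: Dset_def)
  then obtain i where i: "d = (fstep ^^ i) n" "\<forall>j<i. (fstep ^^ j) n \<noteq> 1"
    unfolding Fset_def by auto
  have pre: "\<forall>j<Suc i. (fstep ^^ j) n \<noteq> 1" using i d by (auto simp: less_Suc_eq)
  have "fstep d = (fstep ^^ Suc i) n" using i by simp
  then have "fstep d \<in> Fset n" unfolding Fset_def using pre by blast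
  then show "fstep d dvd n" using assms by (auto simp: Dset_def)
  fix e assume e: "e dvd n \<and> fstep d < e"
  then have "e > 0" by auto
  then have "e \<in> Fset n" using assms e by (auto simp: Dset_def)
  then obtain j where j: "e = (fstep ^^ j) n" "\<forall>t<j. (fstep ^^ t) n \<noteq> 1"
    unfolding Fset_def by auto
  show "d \<le> e"
  proof (cases "j \<le> i")
    case True then show ?thesis using iter_dec[OF i(2) True] i j assms by simp
  next
    case False then have "Suc i \<le> j" by simp
    then have "e \<le> fstep d" using iter_dec[OF j(2) \<open>Suc i \<le> j\<close>] i j assms by simp
    then show ?thesis using e by simp
  qed
qed


lemma L2:
  assumes "Sol n" "1 < n" "d dvd n" "0 < d" "d < n"
  shows "\<exists>u. u dvd n \<and> 1 < u \<and> fstep u = d"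
proof -
  let ?A = "{x. x dvd n \<and> d < x}"
  have fin: "finite ?A" by (rule finite_subset[of _ "{..n}"]) (use assms in \<open>auto intro: dvd_imp_le\<close>)
  have ne: "n \<in> ?A" using assms by auto
  define u where "u = Min ?A"
  have uA: "u \<in> ?A" unfolding u_def using Min_in[OF fin] ne by blast
  have umin: "\<And>x. x \<in> ?A \<Longrightarrow> u \<le> x" unfolding u_def using Min_le[OF fin] by blast
  have u1: "1 < u" using uA assms by auto
  have f: "fstep u dvd n" "\<forall>e. e dvd n \<and> fstep u < e \<longrightarrow> u \<le> e"
    using assms(1) uA u1 unfolding Sol_def by blast+
  have fl: "fstep u < u" using fstep_lt[OF u1] by simp
  have "d \<le> fstep u"
  proof (rule ccontr)
    assume "\<not> d \<le> fstep u"
    then have "u \<le> d" using f(2) assms(3) by auto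
    then show False using uA by simp
  qed
  moreover have "\<not> d < fstep u" using umin[of "fstep u"] f(1) fl by auto
  ultimately show ?thesis using uA u1 by (intro exI[of _ u]) auto
qed

lemma key:
  assumes "u dvd n" "1 < u" "prime P" "P dvd u" "\<forall>q. prime q \<and> q dvd n \<longrightarrow> q \<le> P"
    "\<not> P dvd fstep u"
  shows "u = P"
proof (cases "prime u")
  case True then show ?thesis using assms prime_nat_iff by (metis prime_gt_1_nat less_irrefl)
next
  case False
  define D where "D = dmax u"
  have D: "D dvd u" "1 < D" "D < u" using dmax_mem[OF assms(2) False] D_def by auto
  have fu: "fstep u = u - D" using False D_def by (simp add: fstep_def)
  have nPD: "\<not> P dvd D" using assms(4,6) fu dvd_diff_nat by metis
  define c where "c = u div D"
  have uc: "u = D * c" using D(1) c_def by simp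
  have Pc: "P dvd c" using assms(3,4) nPD uc prime_dvd_mult_iff by metis
  have "c > 0" using uc assms(2) by (cases c) auto
  then have Pc': "P \<le> c" using Pc dvd_imp_le by blast
  obtain q where q: "prime q" "q dvd u" "q \<noteq> P"
  proof -
    obtain r where r: "prime r" "r dvd D" using prime_factor_nat D(2) by (metis less_irrefl)
    then have "r dvd u" using D(1) by (meson dvd_trans)
    moreover have "r \<noteq> P" using r nPD by auto
    ultimately show ?thesis using r that by blast
  qed
  have "q \<le> P" using assms(5) q dvd_trans[OF q(2) assms(1)] by blast
  then have qc: "q < c" using q(3) Pc' by simp
  define e where "e = u div q"
  have eq: "u = e * q" using q(2) e_def by simp
  have q1: "1 < q" using q(1) prime_gt_1_nat by blast
  have "e \<noteq> 0" using eq assms(2) by (cases e) auto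
  moreover have "e \<noteq> 1" using eq False q(1) by auto
  ultimately have e1: "1 < e" by simp
  have eu: "e < u" using eq q1 e1 by simp
  have "e dvd u" using eq by simp
  then have "e \<le> D" using dmax_ge[OF _ e1 eu] D_def by simp
  then have "e * q \<le> D * q" by simp
  also have "\<dots> < D * c" using qc D(2) by simp
  finally show ?thesis using eq uc by simp
qed


definition PP :: "nat \<Rightarrow> nat set" where
  "PP x = {q. q dvd x \<and> (\<exists>p k. prime p \<and> 1 \<le> k \<and> q = p ^ k)}"
lemma PP_1: "PP 1 = {}"
proof -
  { fix p k :: nat assume "prime p" "1 \<le> k" "p ^ k dvd 1"
    then have "p ^ k = 1" by simp
    then have False using \<open>prime p\<close> \<open>1 \<le> k\<close> nat_power_eq_Suc_0_iff by (metis One_nat_def not_one_le_zero prime_gt_1_nat less_irrefl) }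
  then show ?thesis unfolding PP_def by blast
qed
lemma PP_disj:
  assumes "prime P" "\<not> P dvd m"
  shows "PP m \<inter> (\<lambda>j. P ^ j) ` {1..k} = {}"
proof -
  { fix j assume "1 \<le> (j::nat)" "P ^ j dvd m"
    then have "P dvd P ^ j" by (cases j) auto
    then have "P dvd m" using \<open>P ^ j dvd m\<close> dvd_trans by blast
    with assms have False by simp }
  then show ?thesis unfolding PP_def by (auto simp del: One_nat_def) (metis One_nat_def)
qed

lemma geom:
  assumes "2 \<le> (P::nat)"
  shows "(\<Sum>j\<in>{1..k}. 1 / real (P ^ j)) = (1 - 1 / real P ^ k) / (real P - 1)"
proof (induction k)
  case 0 then show ?case by simp
next
  case (Suc k)
  have "(\<Sum>j\<in>{1..Suc k}. 1 / real (P ^ j)) = (\<Sum>j\<in>{1..k}. 1 / real (P ^ j)) + 1 / real P ^ Suc k"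
    by simp
  also have "\<dots> = (1 - 1 / real P ^ k) / (real P - 1) + 1 / real P ^ Suc k" using Suc by simp
  also have "\<dots> = (1 - 1 / real P ^ Suc k) / (real P - 1)"
  proof -
    have "real P - 1 > 0" "real P > 0" using assms by auto
    then show ?thesis by (simp add: field_simps)
  qed
  finally show ?case .
qed
lemma PP_split:
  assumes "prime P" "\<not> P dvd m"
  shows "PP (m * P ^ k) = PP m \<union> (\<lambda>j. P ^ j) ` {1..k}"
proof (intro equalityI subsetI)
  fix q assume "q \<in> PP (m * P ^ k)"
  then obtain p j where q: "q dvd m * P ^ k" "prime p" "1 \<le> j" "q = p ^ j"
    unfolding PP_def by auto
  show "q \<in> PP m \<union> (\<lambda>j. P ^ j) ` {1..k}"
  proof (cases "p = P")
    case True
    have "coprime (P ^ j) m" using assms prime_imp_coprime coprime_power_left_iff by blast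
    then have "P ^ j dvd P ^ k" using q True coprime_dvd_mult_right_iff by metis
    then have "j \<le> k" using power_dvd_imp_le assms(1) prime_gt_1_nat by blast
    then show ?thesis using q True by auto
  next
    case False
    have "coprime p P" using primes_coprime False q(2) assms(1) by blast
    then have "coprime (p ^ j) (P ^ k)" by simp
    then have "q dvd m" using q coprime_dvd_mult_left_iff by metis
    then show ?thesis using q unfolding PP_def by auto
  qed
next
  fix q assume "q \<in> PP m \<union> (\<lambda>j. P ^ j) ` {1..k}"
  then show "q \<in> PP (m * P ^ k)"
  proof
    assume "q \<in> PP m" then show ?thesis unfolding PP_def by auto
  next
    assume "q \<in> (\<lambda>j. P ^ j) ` {1..k}"
    then obtain j where j: "q = P ^ j" "1 \<le> j" "j \<le> k" by auto
    then have "q dvd P ^ k" using le_imp_power_dvd by blast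
    then have "q dvd m * P ^ k" by simp
    then show ?thesis unfolding PP_def using j assms(1) by blast
  qed
qed


lemma PP_fin: "0 < x \<Longrightarrow> finite (PP x)"
  unfolding PP_def by (rule finite_subset[of _ "{..x}"]) (auto intro: dvd_imp_le)

lemma main:
  fixes n :: nat
  shows "1 < n \<Longrightarrow> Sol n \<Longrightarrow> (\<Sum>q\<in>PP n. 1 / real q) + 1 / real n = 1"
proof (induction n rule: less_induct)
  case (less n)
  define Q where "Q = {p. prime p \<and> p dvd n}"
  have finQ: "finite Q" unfolding Q_def
    by (rule finite_subset[of _ "{..n}"]) (use less.prems in \<open>auto intro: dvd_imp_le\<close>)
  have neQ: "Q \<noteq> {}" unfolding Q_def using prime_factor_nat[of n] less.prems by auto
  define P where "P = Max Q"
  have PQ: "P \<in> Q" unfolding P_def using Max_in[OF finQ neQ] .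
  then have P: "prime P" "P dvd n" unfolding Q_def by auto
  have Plarge: "\<forall>q. prime q \<and> q dvd n \<longrightarrow> q \<le> P"
    unfolding P_def using Max_ge[OF finQ] Q_def by blast
  have P2: "2 \<le> P" using P(1) prime_ge_2_nat by blast
  define k where "k = multiplicity P n"
  define m where "m = n div P ^ k"
  have nm: "n = m * P ^ k" unfolding m_def k_def using multiplicity_dvd[of P n] by simp
  have nPm: "\<not> P dvd m" unfolding m_def k_def
    using multiplicity_decompose[of n P] less.prems P(1) by (simp add: prime_nat_iff)
  have k1: "1 \<le> k"
  proof (rule ccontr)
    assume "\<not> 1 \<le> k" then have "k = 0" by simp
    then have "m = n" using nm by simp
    then show False using nPm P by simp
  qed
  have m0: "0 < m" using nm less.prems by (cases m) auto
  have Pk: "1 < P ^ k" using P2 k1 one_less_power[of P k] by simp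
  have mn: "m < n" using nm m0 Pk by simp
  have mdvd: "m dvd n" using nm by simp
  obtain u where u: "u dvd n" "1 < u" "fstep u = m"
    using L2[OF less.prems(2) less.prems(1) mdvd m0 mn] by blast
  have ul: "m < u" using fstep_lt[OF u(2)] u(3) by simp
  have cop: "\<And>x. \<not> P dvd x \<Longrightarrow> x dvd n \<Longrightarrow> x dvd m"
  proof -
    fix x assume "\<not> P dvd x" "x dvd n"
    then have "coprime x P" using P(1) prime_imp_coprime coprime_commute by blast
    then have "coprime x (P ^ k)" by simp
    then show "x dvd m" using \<open>x dvd n\<close> nm coprime_dvd_mult_left_iff by metis
  qed
  have "P dvd u"
  proof (rule ccontr)
    assume "\<not> P dvd u"
    then have "u dvd m" using cop u(1) by blast
    then have "u \<le> m" using m0 dvd_imp_le by blast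
    then show False using ul by simp
  qed
  then have "u = P" using key[OF u(1,2) P(1) _ Plarge] u(3) nPm by blast
  then have mP: "m = P - 1" using u(3) P(1) by (simp add: fstep_def)
  have Solm: "Sol m" unfolding Sol_def
  proof (intro allI impI conjI)
    fix d assume d: "d dvd m \<and> 1 < d"
    then have dn: "d dvd n \<and> 1 < d" using mdvd dvd_trans by blast
    have f: "fstep d dvd n" "\<forall>e. e dvd n \<and> fstep d < e \<longrightarrow> d \<le> e"
      using less.prems(2) dn unfolding Sol_def by blast+
    have "d \<le> m" using d m0 dvd_imp_le by blast
    moreover have "fstep d < d" using fstep_lt[of d] d by simp
    ultimately have "fstep d < P" using mP P2 by linarith
    moreover have "0 < fstep d" using fstep_lt[of d] d by simp
    ultimately have "\<not> P dvd fstep d" using dvd_imp_le not_less by blast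
    then show "fstep d dvd m" using cop f(1) by blast
    fix e assume "e dvd m \<and> fstep d < e"
    then show "d \<le> e" using f(2) mdvd dvd_trans by blast
  qed
  have Sm: "(\<Sum>q\<in>PP m. 1 / real q) + 1 / real m = 1"
  proof (cases "m = 1")
    case True then show ?thesis using PP_1 by simp
  next
    case False then show ?thesis using less.IH[OF mn] m0 Solm by simp
  qed
  have inj: "inj_on (\<lambda>j. P ^ j) {1..k}"
    unfolding inj_on_def using P2 power_inject_exp by auto
  have "(\<Sum>q\<in>PP n. 1 / real q) = (\<Sum>q\<in>PP m. 1 / real q) + (\<Sum>q\<in>(\<lambda>j. P ^ j) ` {1..k}. 1 / real q)"
    unfolding nm PP_split[OF P(1) nPm]
    by (rule sum.union_disjoint) (use PP_fin[OF m0] PP_disj[OF P(1) nPm] in auto)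
  also have "(\<Sum>q\<in>(\<lambda>j. P ^ j) ` {1..k}. 1 / real q) = (\<Sum>j\<in>{1..k}. 1 / real (P ^ j))"
    using sum.reindex[OF inj, of "\<lambda>q. 1 / real q"] by (simp add: comp_def)
  also have "\<dots> = (1 - 1 / real P ^ k) / (real P - 1)" using geom[OF P2] .
  finally have S: "(\<Sum>q\<in>PP n. 1 / real q) = (1 - 1 / real m) + (1 - 1 / real P ^ k) / real m"
    using Sm mP P2 by (simp add: of_nat_diff)
  have rm: "real m > 0" "real P > 0" using m0 P2 by auto
  have rn: "real n = real m * real P ^ k" using nm by simp
  show ?case unfolding S rn using rm by (simp add: field_simps)
qed

theorem theorem3:
  fixes n :: nat
  assumes "1 < n" and "Fset n = Dset n"
  shows "prime_power_pseudoperfect n"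
  using main[OF assms(1) L1[OF assms]] assms(1)
  unfolding prime_power_pseudoperfect_def PP_def by simp

end
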